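(* Let $A_i=\begin{pmatrix}a_i&c_i\\ c_i&b_i\end{pmatrix}$, $i=1,2$, be $2\times2$ positive semidefinite matrices with non-negative real entries. If $a_1\le a_2$, $b_1\le b_2$ and $c_1\le c_2$, then $|||A_1|||\le|||A_2|||$ for every unitarily invariant norm $|||\cdot|||$. *)

theory Defs
  imports "HOL-Analysis.Analysis"
begin

definition conj_transpose :: "complex^2^2 \<Rightarrow> complex^2^2" where
  "conj_transpose A = (\<chi> i j. cnj (A $ j $ i))"

definition unitary2 :: "complex^2^2 \<Rightarrow> bool" where
  "unitary2 U \<longleftrightarrow> conj_transpose U ** U = mat 1"

definition cscale2 :: "complex \<Rightarrow> complex^2^2 \<Rightarrow> complex^2^2" where
  "cscale2 c A = (\<chi> i j. c * A $ i $ j)"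

definition is_matrix_norm2 :: "(complex^2^2 \<Rightarrow> real) \<Rightarrow> bool" where
  "is_matrix_norm2 N \<longleftrightarrow>
     (\<forall>A. 0 \<le> N A) \<and> (\<forall>A. N A = 0 \<longleftrightarrow> A = 0) \<and>
     (\<forall>c A. N (cscale2 c A) = cmod c * N A) \<and>
     (\<forall>A B. N (A + B) \<le> N A + N B)"

definition unitarily_invariant_norm2 :: "(complex^2^2 \<Rightarrow> real) \<Rightarrow> bool" where
  "unitarily_invariant_norm2 N \<longleftrightarrow> is_matrix_norm2 N \<and>
     (\<forall>U V A. unitary2 U \<longrightarrow> unitary2 V \<longrightarrow> N (U ** A ** V) = N A)"

definition psd2 :: "complex^2^2 \<Rightarrow> bool" where
  "psd2 A \<longleftrightarrow> conj_transpose A = A \<and>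
     (\<forall>x :: complex^2. let q = (\<Sum>i\<in>UNIV. cnj (x $ i) * (A *v x) $ i) in Im q = 0 \<and> 0 \<le> Re q)"

definition symmat2 :: "real \<Rightarrow> real \<Rightarrow> real \<Rightarrow> complex^2^2" where
  "symmat2 a c b = vector [vector [complex_of_real a, complex_of_real c],
                          vector [complex_of_real c, complex_of_real b]]"

end

theory Submission imports Defs begin

definition rot :: "real \<Rightarrow> real \<Rightarrow> complex^2^2" where
  "rot p q = vector [vector [complex_of_real p, complex_of_real (-q)],
                     vector [complex_of_real q, complex_of_real p]]"

lemma mat_eq2: "(A::complex^2^2) = B \<longleftrightarrow> A$1$1 = B$1$1 \<and> A$1$2 = B$1$2 \<and> A$2$1 = B$2$1 \<and> A$2$2 = B$2$2"
  by (auto simp: vec_eq_iff forall_2)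

lemma rot_mult: "rot p q ** symmat2 x 0 y ** rot p (-q) =
   symmat2 (x*p\<^sup>2+y*q\<^sup>2) ((x-y)*p*q) (x*q\<^sup>2+y*p\<^sup>2)"
  unfolding mat_eq2
  by (simp add: rot_def symmat2_def matrix_matrix_mult_def sum_2 power2_eq_square algebra_simps)

lemma rot_unitary: assumes "p\<^sup>2+q\<^sup>2 = 1" shows "unitary2 (rot p q)"
proof -
  have "complex_of_real (p*p) + complex_of_real (q*q) = 1"
    using assms by (metis of_real_1 of_real_add power2_eq_square)
  then show ?thesis unfolding unitary2_def mat_eq2
  by (simp add: rot_def conj_transpose_def matrix_matrix_mult_def sum_2 mat_def algebra_simps)
qed

lemma sgn_unitary: "unitary2 (symmat2 (-1) 0 1)"
  unfolding unitary2_def mat_eq2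
  by (simp add: symmat2_def conj_transpose_def matrix_matrix_mult_def sum_2 mat_def)

lemma id_unitary: "unitary2 (mat 1)"
  unfolding unitary2_def mat_eq2
  by (simp add: conj_transpose_def matrix_matrix_mult_def sum_2 mat_def)

lemma sgn_mult: "symmat2 (-1) 0 1 ** symmat2 x 0 y ** mat 1 = symmat2 (-x) 0 y"
  unfolding mat_eq2
  by (simp add: symmat2_def matrix_matrix_mult_def sum_2 mat_def)

lemma symmat2_lin: "symmat2 (t*x+s*x') 0 (t*y+s*y') = cscale2 (of_real t) (symmat2 x 0 y) + cscale2 (of_real s) (symmat2 x' 0 y')"
  unfolding mat_eq2
  by (simp add: symmat2_def cscale2_def)


context
  fixes N :: "complex^2^2 \<Rightarrow> real"
  assumes UI: "unitarily_invariant_norm2 N"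
begin

definition g :: "real \<Rightarrow> real \<Rightarrow> real" where "g x y = N (symmat2 x 0 y)"

lemma N_rot: assumes "p\<^sup>2+q\<^sup>2 = 1"
  shows "N (symmat2 (x*p\<^sup>2+y*q\<^sup>2) ((x-y)*p*q) (x*q\<^sup>2+y*p\<^sup>2)) = g x y"
proof -
  have "p\<^sup>2+(-q)\<^sup>2 = 1" using assms by simp
  then show ?thesis using UI rot_unitary[OF assms] rot_unitary[of p "-q"] rot_mult[of p q x y]
    unfolding unitarily_invariant_norm2_def g_def by metis
qed

lemma g_sym: "g x y = g y x"
  using N_rot[of 0 1 x y] by (simp add: g_def)

lemma g_neg: "g (-x) y = g x y"
  using UI sgn_unitary id_unitary sgn_mult[of x y]
  unfolding unitarily_invariant_norm2_def g_def by metis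

lemma g_conv: assumes "0 \<le> t" "t \<le> 1"
  shows "g (t*x+(1-t)*x') (t*y+(1-t)*y') \<le> t * g x y + (1-t) * g x' y'"
proof -
  have n: "is_matrix_norm2 N" using UI unfolding unitarily_invariant_norm2_def by simp
  have "g (t*x+(1-t)*x') (t*y+(1-t)*y') = N (cscale2 (of_real t) (symmat2 x 0 y) + cscale2 (of_real (1-t)) (symmat2 x' 0 y'))"
    unfolding g_def by (simp add: symmat2_lin)
  also have "\<dots> \<le> N (cscale2 (of_real t) (symmat2 x 0 y)) + N (cscale2 (of_real (1-t)) (symmat2 x' 0 y'))"
    using n unfolding is_matrix_norm2_def by blast
  also have "\<dots> = t * g x y + (1-t) * g x' y'"
  proof -
    have "cmod (of_real (1-t)) = 1-t" "cmod (of_real t) = t" using assms by (simp_all only: norm_of_real)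
    then show ?thesis using n unfolding is_matrix_norm2_def g_def by metis
  qed
  finally show ?thesis .
qed

lemma g_mono1: assumes "\<bar>u\<bar> \<le> v" shows "g u w \<le> g v w"
proof (cases "v = 0")
  case True then show ?thesis using assms by simp
next
  case False
  then have v: "v > 0" using assms by simp
  define t :: real where "t = (v + u) / (2 * v)"
  have t: "0 \<le> t" "t \<le> 1" using assms v by (auto simp: t_def field_simps)
  have u: "u = t * v + (1-t) * (-v)" using v by (simp add: t_def field_simps)
  have "g u w = g (t * v + (1-t) * (-v)) (t*w+(1-t)*w)" using u by (metis add_diff_cancel_left' diff_add_cancel distrib_right mult_1)
  also have "\<dots> \<le> t * g v w + (1-t) * g (-v) w" by (rule g_conv[OF t])
  also have "\<dots> = g v w" by (simp add: g_neg algebra_simps)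
  finally show ?thesis .
qed

lemma g_mono2: assumes "\<bar>u\<bar> \<le> v" shows "g w u \<le> g w v"
  using g_mono1[OF assms] g_sym by metis

lemma g_major:
  assumes "0 \<le> x2" "x2 \<le> x1" "x1 \<le> y1" "x1 + x2 \<le> y1 + y2" "0 \<le> y2" "y2 \<le> y1"
  shows "g x1 x2 \<le> g y1 y2"
proof (cases "x2 \<le> y2")
  case True
  have "g x1 x2 \<le> g y1 x2" using assms by (intro g_mono1) simp
  also have "\<dots> \<le> g y1 y2" using assms True by (intro g_mono2) simp
  finally show ?thesis .
next
  case False
  define x1' where "x1' = y1 + y2 - x2"
  have hy: "y1 > y2" using False assms by simp
  define t where "t = (x1' - y2)/(y1-y2)"
  have t: "0 \<le> t" "t \<le> 1" using hy assms False by (auto simp: t_def x1'_def field_simps)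
  have "t*(y1-y2) = x1'-y2" using hy by (simp add: t_def)
  then have e1: "x1' = t*y1 + (1-t)*y2" by (simp add: algebra_simps)
  have e2: "x2 = t*y2 + (1-t)*y1" using e1 by (simp add: x1'_def algebra_simps)
  have "g x1 x2 \<le> g x1' x2" using assms by (intro g_mono1) (simp add: x1'_def)
  also have "\<dots> = g (t*y1 + (1-t)*y2) (t*y2 + (1-t)*y1)" using e1 e2 by simp
  also have "\<dots> \<le> t * g y1 y2 + (1-t) * g y2 y1" by (rule g_conv[OF t])
  also have "\<dots> = g y1 y2" by (simp add: g_sym[of y2 y1] algebra_simps)
  finally show ?thesis .
qed

end


lemma psd_form: assumes "psd2 (symmat2 a c b)"
  shows "0 \<le> a*u\<^sup>2 + 2*c*u*z + b*z\<^sup>2"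
proof -
  let ?x = "vector [complex_of_real u, complex_of_real z] :: complex^2"
  have "(\<Sum>i\<in>UNIV. cnj (?x $ i) * (symmat2 a c b *v ?x) $ i) = complex_of_real (a*u\<^sup>2 + 2*c*u*z + b*z\<^sup>2)"
    by (simp add: symmat2_def matrix_vector_mult_def sum_2 power2_eq_square algebra_simps)
  then show ?thesis using assms unfolding psd2_def Let_def by (metis Re_complex_of_real)
qed

lemma psd_det: assumes "psd2 (symmat2 a c b)" "0 \<le> a" "0 \<le> b" "0 \<le> c"
  shows "c\<^sup>2 \<le> a*b"
proof -
  have 1: "0 \<le> a*(a*b - c\<^sup>2)" using psd_form[OF assms(1), of "-c" a]
    by (simp add: power2_eq_square algebra_simps)
  have 2: "0 \<le> b*(a*b - c\<^sup>2)" using psd_form[OF assms(1), of b "-c"]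
    by (simp add: power2_eq_square algebra_simps)
  show ?thesis
  proof (cases "a + b > 0")
    case True
    have "0 \<le> (a+b)*(a*b - c\<^sup>2)" using 1 2 by (simp add: algebra_simps)
    then show ?thesis using True by (simp add: zero_le_mult_iff)
  next
    case False
    then have "a = 0" "b = 0" using assms by auto
    then show ?thesis using psd_form[OF assms(1), of 1 "-1"] assms(4) by simp
  qed
qed

lemma eig:
  fixes a b c :: real
  assumes UI: "unitarily_invariant_norm2 N" and c: "0 \<le> c"
  defines "r \<equiv> sqrt (((a-b)/2)\<^sup>2 + c\<^sup>2)"
  shows "N (symmat2 a c b) = g N ((a+b)/2 + r) ((a+b)/2 - r)"
proof (cases "r = 0")
  case True
  then have "c = 0" "a = b" unfolding r_def by (simp_all add: add_nonneg_eq_0_iff)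
  then show ?thesis using True by (simp add: g_def[OF UI])
next
  case False
  define d where "d = (a-b)/2"
  have "r \<ge> 0" unfolding r_def by simp
  then have r: "r > 0" using False by simp
  have rr: "r\<^sup>2 = d\<^sup>2 + c\<^sup>2" unfolding r_def d_def by simp
  have dr: "\<bar>d\<bar> \<le> r" unfolding r_def d_def
    by (metis le_add_same_cancel1 real_sqrt_abs real_sqrt_le_mono zero_le_power2)
  define p where "p = sqrt ((r+d)/(2*r))"
  define q where "q = sqrt ((r-d)/(2*r))"
  have p2: "p\<^sup>2 = (r+d)/(2*r)" unfolding p_def using dr r by simp
  have q2: "q\<^sup>2 = (r-d)/(2*r)" unfolding q_def using dr r by simp
  have "p\<^sup>2 + q\<^sup>2 = ((r+d)+(r-d))/(2*r)" by (simp only: p2 q2 add_divide_distrib)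
  then have pq1: "p\<^sup>2 + q\<^sup>2 = 1" using r by simp
  have "p*q = sqrt ((r+d)/(2*r) * ((r-d)/(2*r)))" unfolding p_def q_def by (rule real_sqrt_mult[symmetric])
  also have "(r+d)/(2*r) * ((r-d)/(2*r)) = (c/(2*r))\<^sup>2" using rr r
    by (simp add: field_simps power2_eq_square)
  finally have pq: "p*q = c/(2*r)" using c r by simp
  let ?l1 = "(a+b)/2 + r" and ?l2 = "(a+b)/2 - r"
  have e1: "?l1*p\<^sup>2 + ?l2*q\<^sup>2 = a" unfolding p2 q2 d_def using r by (simp add: field_simps)
  have e3: "?l1*q\<^sup>2 + ?l2*p\<^sup>2 = b" unfolding p2 q2 d_def using r by (simp add: field_simps)
  have e2: "(?l1 - ?l2)*p*q = c" using pq r by (simp add: field_simps)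
  show ?thesis using N_rot[OF UI pq1, of ?l1 ?l2] e1 e2 e3 by simp
qed


lemma r_cmod: "sqrt (d\<^sup>2 + c\<^sup>2) = cmod (Complex d c)"
  by (simp add: cmod_def)

lemma r_mono:
  assumes "0 \<le> c1" "c1 \<le> c2" "a1 \<le> a2" "b1 \<le> b2"
  shows "sqrt (((a1-b1)/2)\<^sup>2 + c1\<^sup>2) \<le> sqrt (((a2-b2)/2)\<^sup>2 + c2\<^sup>2) + ((a2-a1)+(b2-b1))/2"
proof -
  define d1 where "d1 = (a1-b1)/2"
  define d2 where "d2 = (a2-b2)/2"
  have "Complex d1 c1 = Complex d2 c1 + Complex (d1-d2) 0" by (simp add: complex_eq_iff)
  then have "cmod (Complex d1 c1) \<le> cmod (Complex d2 c1) + cmod (Complex (d1-d2) 0)"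
    by (metis norm_triangle_ineq)
  moreover have "cmod (Complex d2 c1) \<le> cmod (Complex d2 c2)"
    unfolding cmod_def using assms by (simp add: power_mono)
  moreover have "cmod (Complex (d1-d2) 0) \<le> ((a2-a1)+(b2-b1))/2"
  proof -
    have "cmod (Complex (d1-d2) 0) = \<bar>d1-d2\<bar>" by (simp add: cmod_def)
    then show ?thesis unfolding d1_def d2_def using assms by (simp add: abs_if field_simps)
  qed
  ultimately show ?thesis unfolding r_cmod d1_def[symmetric] d2_def[symmetric] by linarith
qed

lemma l2_nonneg:
  assumes "c\<^sup>2 \<le> a*b" "0 \<le> a" "0 \<le> b"
  shows "sqrt (((a-b)/2)\<^sup>2 + c\<^sup>2) \<le> (a+b)/2"
proof -
  have "((a-b)/2)\<^sup>2 + c\<^sup>2 \<le> ((a+b)/2)\<^sup>2" using assms(1) by (simp add: power2_eq_square field_simps)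
  then have "sqrt (((a-b)/2)\<^sup>2 + c\<^sup>2) \<le> sqrt (((a+b)/2)\<^sup>2)" by (rule real_sqrt_le_mono)
  then show ?thesis using assms by simp
qed

theorem mainTheorem10:
  fixes a1 b1 c1 a2 b2 c2 :: real and N :: "complex^2^2 \<Rightarrow> real"
  assumes "0 \<le> a1" "0 \<le> b1" "0 \<le> c1" "0 \<le> a2" "0 \<le> b2" "0 \<le> c2"
    and "psd2 (symmat2 a1 c1 b1)" "psd2 (symmat2 a2 c2 b2)"
    and "a1 \<le> a2" "b1 \<le> b2" "c1 \<le> c2"
    and "unitarily_invariant_norm2 N"
  shows "N (symmat2 a1 c1 b1) \<le> N (symmat2 a2 c2 b2)"
proof -
  define r1 where "r1 = sqrt (((a1-b1)/2)\<^sup>2 + c1\<^sup>2)"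
  define r2 where "r2 = sqrt (((a2-b2)/2)\<^sup>2 + c2\<^sup>2)"
  have r1: "0 \<le> r1" "r1 \<le> (a1+b1)/2" unfolding r1_def
    using l2_nonneg[OF psd_det[OF assms(7,1,2,3)]] assms by simp_all
  have r2: "0 \<le> r2" "r2 \<le> (a2+b2)/2" unfolding r2_def
    using l2_nonneg[OF psd_det[OF assms(8,4,5,6)]] assms by simp_all
  have m: "r1 \<le> r2 + ((a2-a1)+(b2-b1))/2" unfolding r1_def r2_def
    using r_mono[of c1 c2 a1 a2 b1 b2] assms by simp
  have "g N ((a1+b1)/2 + r1) ((a1+b1)/2 - r1) \<le> g N ((a2+b2)/2 + r2) ((a2+b2)/2 - r2)"
    apply (rule g_major[OF assms(12)])
    using r1 r2 m assms by (auto simp: field_simps)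
  then show ?thesis
    using eig[OF assms(12) assms(3), of a1 b1] eig[OF assms(12) assms(6), of a2 b2]
    unfolding r1_def r2_def by simp
qed

end
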